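(* Let $(k,|\cdot|)$ be a complete valued field and $\mu$ a probability measure with countable support on $\mathrm{SL}(2,k)$ with $\int\log\|\gamma\|\,d\mu(\gamma)<\infty$. Suppose that every element of the support of $\mu$, acting as a Möbius transformation, leaves the pair $\{0,\infty\}$ invariant, and at least one element of the support permutes $0$ and $\infty$. Then $\chi(\mu)=0$.
   Context: $\|\cdot\|$ is the operator norm on $\mathrm{SL}(2,k)$ for the max norm on $k^2$; $\chi(\mu)=\lim_n\frac1n\int\log\|\gamma\|\,d\mu^n(\gamma)$ with $\mu^n$ the $n$-th convolution power. Such elements are matrices $\mathrm{diag}(\alpha,\alpha^{-1})$ or $\begin{pmatrix}0&-\alpha\\\alpha^{-1}&0\end{pmatrix}$. *)

theory Defs
  imports "HOL-Probability.Probability"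
begin

definition absolute_value :: "('k::field \<Rightarrow> real) \<Rightarrow> bool" where
  "absolute_value av \<longleftrightarrow>
     (\<forall>x. av x \<ge> 0) \<and> (\<forall>x. av x = 0 \<longleftrightarrow> x = 0) \<and>
     (\<forall>x y. av (x * y) = av x * av y) \<and> (\<forall>x y. av (x + y) \<le> av x + av y)"

definition complete_valued_field :: "('k::field \<Rightarrow> real) \<Rightarrow> bool" where
  "complete_valued_field av \<longleftrightarrow> absolute_value av \<and>
     (\<forall>s :: nat \<Rightarrow> 'k. (\<forall>e>0. \<exists>N. \<forall>m\<ge>N. \<forall>n\<ge>N. av (s m - s n) < e) \<longrightarrow>
        (\<exists>l. (\<lambda>n. av (s n - l)) \<longlonglongrightarrow> 0))"

text \<open>A matrix (a,b,c,d) stands for [[a,b],[c,d]].\<close>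
type_synonym 'k mat2 = "'k \<times> 'k \<times> 'k \<times> 'k"

fun mmul :: "'k::field mat2 \<Rightarrow> 'k mat2 \<Rightarrow> 'k mat2" where
  "mmul (a, b, c, d) (a', b', c', d') =
     (a*a' + b*c', a*b' + b*d', c*a' + d*c', c*b' + d*d')"

definition mid :: "'k::field mat2" where "mid = (1, 0, 0, 1)"

fun mdet :: "'k::field mat2 \<Rightarrow> 'k" where
  "mdet (a, b, c, d) = a*d - b*c"

definition SL2 :: "'k::field mat2 set" where
  "SL2 = {g. mdet g = 1}"

fun mapply :: "'k::field mat2 \<Rightarrow> 'k \<times> 'k \<Rightarrow> 'k \<times> 'k" where
  "mapply (a, b, c, d) (x, y) = (a*x + b*y, c*x + d*y)"

fun vnorm :: "('k \<Rightarrow> real) \<Rightarrow> 'k \<times> 'k \<Rightarrow> real" where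
  "vnorm av (x, y) = max (av x) (av y)"

definition opnorm :: "('k::field \<Rightarrow> real) \<Rightarrow> 'k mat2 \<Rightarrow> real" where
  "opnorm av g = (SUP v \<in> {v. v \<noteq> (0, 0)}. vnorm av (mapply g v) / vnorm av v)"

datatype 'k proj = Fin 'k | Infty

fun mobius :: "'k::field mat2 \<Rightarrow> 'k proj \<Rightarrow> 'k proj" where
  "mobius (a, b, c, d) (Fin z) =
     (if c*z + d = 0 then Infty else Fin ((a*z + b) / (c*z + d)))"
| "mobius (a, b, c, d) Infty = (if c = 0 then Infty else Fin (a / c))"

definition conv :: "'k::field mat2 pmf \<Rightarrow> 'k mat2 pmf \<Rightarrow> 'k mat2 pmf" where
  "conv p q = bind_pmf p (\<lambda>x. map_pmf (\<lambda>y. mmul x y) q)"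

fun convpow :: "'k::field mat2 pmf \<Rightarrow> nat \<Rightarrow> 'k mat2 pmf" where
  "convpow p 0 = return_pmf mid"
| "convpow p (Suc n) = conv (convpow p n) p"

end

theory Submission
  imports Defs
begin


lemma av_facts:
  assumes "absolute_value av"
  shows "av 0 = 0" "av (1::'k::field) = 1" "\<And>x. x \<noteq> 0 \<Longrightarrow> av x > 0"
    "\<And>x y. av (x*y) = av x * av y" "\<And>x. av (-x) = av x" "\<And>x. av x \<ge> 0"
proof -
  have nn: "\<And>x. av x \<ge> 0" and z: "\<And>x. av x = 0 \<longleftrightarrow> x = 0"
    and m: "\<And>x y. av (x*y) = av x * av y" using assms unfolding absolute_value_def by auto
  show "av 0 = 0" using z by simp
  show "\<And>x. av x \<ge> 0" by (rule nn)
  show "\<And>x y. av (x*y) = av x * av y" by (rule m)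
  have "av 1 = av 1 * av 1" using m[of 1 1] by simp
  moreover have "av 1 \<noteq> 0" using z by simp
  ultimately show o: "av (1::'k) = 1" by (metis mult_cancel_right1)
  show "\<And>x. x \<noteq> 0 \<Longrightarrow> av x > 0" using nn z by (metis less_eq_real_def)
  have "av (-1::'k) * av (-1) = 1" using m[of "-1::'k" "-1"] o by simp
  hence n1: "av (-1::'k) = 1" using nn[of "-1::'k"]
  proof -
    have "(av (-1::'k) - 1) * (av (-1) + 1) = 0" using \<open>av (-1::'k) * av (-1) = 1\<close> by (simp add: algebra_simps)
    moreover have "av (-1::'k) + 1 > 0" using nn[of "-1::'k"] by linarith
    ultimately show ?thesis by simp
  qed
  show "\<And>x. av (-x) = av x" proof - fix x :: 'k have "-x = (-1)*x" by simp then show "av (-x) = av x" using m[of "-1" x] n1 by simp qed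
qed

definition monoM :: "'k::field mat2 set" where
  "monoM = {(a,0,0,d)| a d. a*d = 1} \<union> {(0,b,c,0)| b c. b*c = -1}"

fun psi :: "('k::field \<Rightarrow> real) \<Rightarrow> 'k mat2 \<Rightarrow> real" where
  "psi av (a,b,c,d) = (if b = 0 \<and> c = 0 then ln (av a) else ln (av b))"

fun sg :: "'k::field mat2 \<Rightarrow> real" where
  "sg (a,b,c,d) = (if b = 0 \<and> c = 0 then 1 else -1)"

lemma sg_sq: "sg g * sg g = 1"
  by (cases g) auto

lemma in_monoM:
  assumes "g \<in> SL2" "mobius g ` {Fin 0, Infty} = {Fin 0, Infty}"
  shows "g \<in> monoM"
proof -
  obtain a b c d where g: "g = (a,b,c,d)" by (cases g) auto
  have det: "a*d - b*c = 1" using assms(1) g by (simp add: SL2_def)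
  have S: "{mobius g (Fin 0), mobius g Infty} = {Fin 0, Infty}" using assms(2) by simp
  show ?thesis
  proof (cases "d = 0")
    case True
    then have "mobius g (Fin 0) = Infty" using g by simp
    with S have "mobius g Infty = Fin 0" by (auto simp: doubleton_eq_iff)
    then have "c \<noteq> 0" "a / c = 0" using g by (auto split: if_splits)
    then have "a = 0" by simp
    with True det have "-(b*c) = 1" by simp
    then have "b*c = -1" by (simp add: minus_equation_iff)
    with True \<open>a = 0\<close> show ?thesis unfolding monoM_def g by auto
  next
    case False
    then have "mobius g (Fin 0) = Fin (b/d)" using g by simp
    with S have "b/d = 0" "mobius g Infty = Infty" by (auto simp: doubleton_eq_iff)
    then have "b = 0" "c = 0" using False g by (auto split: if_splits)
    with det show ?thesis unfolding monoM_def g by auto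
  qed
qed

lemma swap_sg:
  assumes "g \<in> monoM" "mobius g (Fin 0) = Infty"
  shows "sg g = -1"
  using assms unfolding monoM_def by (auto split: if_splits)

lemma mid_monoM: "mid \<in> monoM" unfolding monoM_def mid_def by auto

lemma mmul_monoM:
  assumes "g \<in> monoM" "h \<in> monoM"
  shows "mmul g h \<in> monoM"
  using assms unfolding monoM_def
proof (elim UnE CollectE exE conjE)
  fix a d a' d' :: 'a assume *: "g = (a,0,0,d)" "a*d = 1" "h = (a',0,0,d')" "a'*d' = 1"
  have "(a*a')*(d*d') = (a*d)*(a'*d')" by (simp add: algebra_simps)
  with * show "mmul g h \<in> {(a,0,0,d)| a d. a*d = 1} \<union> {(0,b,c,0)| b c. b*c = -1}" by auto
next
  fix a d b c :: 'a assume *: "g = (a,0,0,d)" "a*d = 1" "h = (0,b,c,0)" "b*c = -1"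
  have "(a*b)*(d*c) = (a*d)*(b*c)" by (simp add: algebra_simps)
  with * show "mmul g h \<in> {(a,0,0,d)| a d. a*d = 1} \<union> {(0,b,c,0)| b c. b*c = -1}" by auto
next
  fix a d b c :: 'a assume *: "h = (a,0,0,d)" "a*d = 1" "g = (0,b,c,0)" "b*c = -1"
  have "(b*d)*(c*a) = (a*d)*(b*c)" by (simp add: algebra_simps)
  with * show "mmul g h \<in> {(a,0,0,d)| a d. a*d = 1} \<union> {(0,b,c,0)| b c. b*c = -1}" by auto
next
  fix b c b' c' :: 'a assume *: "g = (0,b,c,0)" "b*c = -1" "h = (0,b',c',0)" "b'*c' = -1"
  have "(b*c')*(c*b') = (b*c)*(b'*c')" by (simp add: algebra_simps)
  with * show "mmul g h \<in> {(a,0,0,d)| a d. a*d = 1} \<union> {(0,b,c,0)| b c. b*c = -1}" by auto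
qed



lemma vnorm_pos:
  assumes "absolute_value av" "v \<noteq> (0,0)"
  shows "vnorm av v > 0"
proof -
  obtain x y where v: "v = (x,y)" by (cases v)
  have "x \<noteq> 0 \<or> y \<noteq> 0" using assms(2) v by auto
  then show ?thesis using av_facts(3)[OF assms(1)] v by (auto simp: less_max_iff_disj)
qed

lemma opnorm_eq:
  assumes av: "absolute_value av"
    and bd: "\<And>x y. vnorm av (mapply g (x,y)) \<le> m * vnorm av (x,y)"
    and v0: "v0 \<noteq> (0,0)" "vnorm av (mapply g v0) = m * vnorm av v0"
  shows "opnorm av g = m"
  unfolding opnorm_def
proof (rule cSup_eq_maximum)
  have "vnorm av v0 > 0" using vnorm_pos[OF av v0(1)] .
  then have "vnorm av (mapply g v0) / vnorm av v0 = m" using v0(2) by simp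
  then show "m \<in> (\<lambda>v. vnorm av (mapply g v) / vnorm av v) ` {v. v \<noteq> (0, 0)}"
    using v0(1) by force
next
  fix r assume "r \<in> (\<lambda>v. vnorm av (mapply g v) / vnorm av v) ` {v. v \<noteq> (0, 0)}"
  then obtain v where v: "v \<noteq> (0,0)" "r = vnorm av (mapply g v) / vnorm av v" by auto
  obtain x y where xy: "v = (x,y)" by (cases v)
  have p: "vnorm av v > 0" using vnorm_pos[OF av v(1)] .
  show "r \<le> m" using bd[of x y] p v xy by (simp add: divide_le_eq)
qed

lemma ln_max_inv:
  fixes t :: real assumes t: "t > 0" shows "ln (max t (1/t)) = \<bar>ln t\<bar>"
proof (cases "t \<ge> 1")
  case True
  then have h: "1/t \<le> 1" using t by (simp add: divide_le_eq_1)
  have "1/t \<le> t" using order_trans[OF h True] .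
  then show ?thesis using True t by (simp add: max_def)
next
  case False
  then have h: "1 \<le> 1/t" using t by (simp add: le_divide_eq_1)
  have "t \<le> 1/t" using False h by linarith
  moreover have "ln t < 0" using False t by simp
  ultimately show ?thesis using t by (simp add: max_def ln_div)
qed

lemma max_bd:
  fixes p q x y :: real
  assumes "0\<le>p" "0\<le>q" "0\<le>x" "0\<le>y"
  shows "max (p*x) (q*y) \<le> max p q * max x y"
proof -
  have "p*x \<le> max p q * max x y" by (rule mult_mono) (use assms in auto)
  moreover have "q*y \<le> max p q * max x y" by (rule mult_mono) (use assms in auto)
  ultimately show ?thesis by simp
qed

lemma opnorm_monoM:
  assumes av: "absolute_value av" and g: "g \<in> monoM"
  shows "ln (opnorm av g) = \<bar>psi av g\<bar>"
  using g unfolding monoM_def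
proof (elim UnE CollectE exE conjE)
  fix a d assume *: "g = (a,0,0,d)" "a*d = 1"
  have a0: "a \<noteq> 0" and d0: "d \<noteq> 0" using *(2) by auto
  have pa: "av a > 0" using av_facts(3)[OF av a0] .
  have "av a * av d = 1" using *(2) av_facts(2,4)[OF av] by metis
  then have ad: "av d = 1 / av a" using pa by (simp add: field_simps)
  have on: "opnorm av g = max (av a) (av d)"
  proof (rule opnorm_eq[OF av])
    fix x y
    show "vnorm av (mapply g (x, y)) \<le> max (av a) (av d) * vnorm av (x, y)"
      using * av_facts(4,6)[OF av] max_bd[of "av a" "av d" "av x" "av y"] by simp
  next
    show "(if av a \<ge> av d then (1,0) else (0,1)) \<noteq> (0::'a, 0::'a)" by auto
    show "vnorm av (mapply g (if av a \<ge> av d then (1,0) else (0,1))) = max (av a) (av d) * vnorm av (if av a \<ge> av d then (1,0) else (0,1))"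
      using * av_facts(1,2)[OF av] av_facts(6)[OF av, of a] av_facts(6)[OF av, of d] by (auto simp: max_def)
  qed
  show "ln (opnorm av g) = \<bar>psi av g\<bar>" using on ad pa * ln_max_inv[OF pa] by simp
next
  fix b c assume *: "g = (0,b,c,0)" "b*c = -1"
  have b0: "b \<noteq> 0" and c0: "c \<noteq> 0" using *(2) by auto
  have pb: "av b > 0" using av_facts(3)[OF av b0] .
  have "av b * av c = 1" using *(2) av_facts(2,4,5)[OF av] by metis
  then have bc: "av c = 1 / av b" using pb by (simp add: field_simps)
  have on: "opnorm av g = max (av b) (av c)"
  proof (rule opnorm_eq[OF av])
    fix x y
    show "vnorm av (mapply g (x, y)) \<le> max (av b) (av c) * vnorm av (x, y)"
      using * av_facts(4,6)[OF av] max_bd[of "av b" "av c" "av y" "av x"] by (simp add: max.commute)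
  next
    show "(if av b \<ge> av c then (0,1) else (1,0)) \<noteq> (0::'a, 0::'a)" by auto
    show "vnorm av (mapply g (if av b \<ge> av c then (0,1) else (1,0))) = max (av b) (av c) * vnorm av (if av b \<ge> av c then (0,1) else (1,0))"
      using * av_facts(1,2)[OF av] av_facts(6)[OF av, of b] av_facts(6)[OF av, of c] by (auto simp: max_def)
  qed
  show "ln (opnorm av g) = \<bar>psi av g\<bar>" using on bc pb * b0 ln_max_inv[OF pb] by simp
qed

lemma ln_av_mul:
  assumes av: "absolute_value av" and "x \<noteq> 0" "y \<noteq> 0"
  shows "ln (av (x*y)) = ln (av x) + ln (av y)"
proof -
  have "av x > 0" "av y > 0" using av_facts(3)[OF av] assms(2,3) by auto
  then show ?thesis using av_facts(4)[OF av] by (simp add: ln_mult)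
qed

lemma ln_av_inv:
  assumes av: "absolute_value av" and "x*y = 1 \<or> x*y = -1"
  shows "ln (av y) = - ln (av x)"
proof -
  have "av (x*y) = 1" using assms(2) av_facts(2,5)[OF av] by auto
  then have "av x * av y = 1" using av_facts(4)[OF av] by simp
  moreover have "x \<noteq> 0" "y \<noteq> 0" using assms(2) by auto
  then have "av x > 0" "av y > 0" using av_facts(3)[OF av] by auto
  ultimately have "ln (av x) + ln (av y) = 0" using ln_mult[of "av x" "av y"] by simp
  then show ?thesis by linarith
qed

lemma psi_sg_mul:
  assumes av: "absolute_value av" and g: "g \<in> monoM" and h: "h \<in> monoM"
  shows "psi av (mmul g h) = psi av g + sg g * psi av h \<and> sg (mmul g h) = sg g * sg h"
  using g h unfolding monoM_def
proof (elim UnE CollectE exE conjE)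
  fix a d a' d' :: 'a assume *: "g = (a,0,0,d)" "a*d = 1" "h = (a',0,0,d')" "a'*d' = 1"
  then have "a \<noteq> 0" "a' \<noteq> 0" by auto
  with * show ?thesis using ln_av_mul[OF av, of a a'] by simp
next
  fix a d b c :: 'a assume *: "g = (a,0,0,d)" "a*d = 1" "h = (0,b,c,0)" "b*c = -1"
  then have "a \<noteq> 0" "b \<noteq> 0" "d \<noteq> 0" "c \<noteq> 0" by auto
  with * show ?thesis using ln_av_mul[OF av, of a b] by simp
next
  fix a d b c :: 'a assume *: "h = (a,0,0,d)" "a*d = 1" "g = (0,b,c,0)" "b*c = -1"
  then have "a \<noteq> 0" "b \<noteq> 0" "d \<noteq> 0" "c \<noteq> 0" by auto
  with * show ?thesis using ln_av_mul[OF av, of b d] ln_av_inv[OF av, of a d] by simp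
next
  fix b c b' c' :: 'a assume *: "g = (0,b,c,0)" "b*c = -1" "h = (0,b',c',0)" "b'*c' = -1"
  then have "b \<noteq> 0" "b' \<noteq> 0" "c \<noteq> 0" "c' \<noteq> 0" by auto
  with * show ?thesis using ln_av_mul[OF av, of b c'] ln_av_inv[OF av, of b' c'] by simp
qed

lemma psi_mid: assumes "absolute_value av" shows "psi av mid = 0"
  unfolding mid_def using av_facts(2)[OF assms] by simp



lemma integrable_pmf_bdd:
  fixes f :: "'a \<Rightarrow> real"
  assumes "\<And>y. y \<in> set_pmf p \<Longrightarrow> \<bar>f y\<bar> \<le> B"
  shows "integrable (measure_pmf p) f"
  by (rule measure_pmf.integrable_const_bound[where B=B]) (use assms in \<open>auto simp: AE_measure_pmf_iff\<close>)

lemma integral_bind_pmf_nonneg: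
  fixes G :: "'b \<Rightarrow> real"
  assumes bd: "\<And>y. y \<in> set_pmf (bind_pmf p q) \<Longrightarrow> 0 \<le> G y \<and> G y \<le> B"
  shows "(\<integral>y. G y \<partial>measure_pmf (bind_pmf p q)) = (\<integral>x. (\<integral>y. G y \<partial>measure_pmf (q x)) \<partial>measure_pmf p)"
proof -
  have "(\<integral>y. G y \<partial>measure_pmf (bind_pmf p q)) = enn2real (\<integral>\<^sup>+y. ennreal (G y) \<partial>measure_pmf (bind_pmf p q))"
    by (rule integral_eq_nn_integral) (use bd in \<open>auto simp: AE_measure_pmf_iff\<close>)
  also have "\<dots> = enn2real (\<integral>\<^sup>+x. \<integral>\<^sup>+y. ennreal (G y) \<partial>measure_pmf (q x) \<partial>measure_pmf p)"
    by simp
  also have "(\<integral>\<^sup>+x. \<integral>\<^sup>+y. ennreal (G y) \<partial>measure_pmf (q x) \<partial>measure_pmf p)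
      = (\<integral>\<^sup>+x. ennreal (\<integral>y. G y \<partial>measure_pmf (q x)) \<partial>measure_pmf p)"
  proof (rule nn_integral_cong_AE, unfold AE_measure_pmf_iff, intro ballI)
    fix x assume x: "x \<in> set_pmf p"
    have sub: "\<And>y. y \<in> set_pmf (q x) \<Longrightarrow> y \<in> set_pmf (bind_pmf p q)" using x by (auto simp: set_bind_pmf)
    show "(\<integral>\<^sup>+y. ennreal (G y) \<partial>measure_pmf (q x)) = ennreal (\<integral>y. G y \<partial>measure_pmf (q x))"
      by (rule nn_integral_eq_integral)
         (use sub bd in \<open>auto simp: AE_measure_pmf_iff intro!: integrable_pmf_bdd[where B=B]\<close>)
  qed
  also have "enn2real \<dots> = (\<integral>x. (\<integral>y. G y \<partial>measure_pmf (q x)) \<partial>measure_pmf p)"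
  proof (rule integral_eq_nn_integral[symmetric])
    show "(\<lambda>x. \<integral>y. G y \<partial>measure_pmf (q x)) \<in> borel_measurable (measure_pmf p)" by simp
    show "AE x in measure_pmf p. 0 \<le> (\<integral>y. G y \<partial>measure_pmf (q x))"
      unfolding AE_measure_pmf_iff
    proof
      fix x assume x: "x \<in> set_pmf p"
      have sub: "\<And>y. y \<in> set_pmf (q x) \<Longrightarrow> y \<in> set_pmf (bind_pmf p q)" using x by (auto simp: set_bind_pmf)
      show "0 \<le> (\<integral>y. G y \<partial>measure_pmf (q x))"
        by (rule integral_nonneg_AE) (use sub bd in \<open>auto simp: AE_measure_pmf_iff\<close>)
    qed
  qed
  finally show ?thesis .
qed

lemma integral_bind_pmf_bdd:
  fixes F :: "'b \<Rightarrow> real"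
  assumes bd: "\<And>y. y \<in> set_pmf (bind_pmf p q) \<Longrightarrow> \<bar>F y\<bar> \<le> B"
  shows "(\<integral>y. F y \<partial>measure_pmf (bind_pmf p q)) = (\<integral>x. (\<integral>y. F y \<partial>measure_pmf (q x)) \<partial>measure_pmf p)"
proof -
  define P where "P y = max (F y) 0" for y
  define N where "N y = max (- F y) 0" for y
  have FPN: "\<And>y. F y = P y - N y" unfolding P_def N_def by auto
  have bP: "\<And>y. y \<in> set_pmf (bind_pmf p q) \<Longrightarrow> 0 \<le> P y \<and> P y \<le> B"
    using bd unfolding P_def by fastforce
  have bN: "\<And>y. y \<in> set_pmf (bind_pmf p q) \<Longrightarrow> 0 \<le> N y \<and> N y \<le> B"
    using bd unfolding N_def by fastforce
  have iP: "\<And>r. (\<And>y. y \<in> set_pmf r \<Longrightarrow> y \<in> set_pmf (bind_pmf p q)) \<Longrightarrow> integrable (measure_pmf r) P"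
    by (rule integrable_pmf_bdd[where B=B]) (use bP in fastforce)
  have iN: "\<And>r. (\<And>y. y \<in> set_pmf r \<Longrightarrow> y \<in> set_pmf (bind_pmf p q)) \<Longrightarrow> integrable (measure_pmf r) N"
    by (rule integrable_pmf_bdd[where B=B]) (use bN in fastforce)
  have sub: "\<And>x y. x \<in> set_pmf p \<Longrightarrow> y \<in> set_pmf (q x) \<Longrightarrow> y \<in> set_pmf (bind_pmf p q)"
    by (auto simp: set_bind_pmf)
  have "(\<integral>y. F y \<partial>measure_pmf (bind_pmf p q)) = (\<integral>y. P y \<partial>measure_pmf (bind_pmf p q)) - (\<integral>y. N y \<partial>measure_pmf (bind_pmf p q))"
    unfolding FPN by (rule Bochner_Integration.integral_diff) (auto intro!: iP iN)
  also have "\<dots> = (\<integral>x. (\<integral>y. P y \<partial>measure_pmf (q x)) \<partial>measure_pmf p) - (\<integral>x. (\<integral>y. N y \<partial>measure_pmf (q x)) \<partial>measure_pmf p)"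
    using integral_bind_pmf_nonneg[of p q P B, OF bP] integral_bind_pmf_nonneg[of p q N B, OF bN] by simp
  also have "\<dots> = (\<integral>x. (\<integral>y. P y \<partial>measure_pmf (q x)) - (\<integral>y. N y \<partial>measure_pmf (q x)) \<partial>measure_pmf p)"
  proof (rule Bochner_Integration.integral_diff[symmetric])
    show "integrable (measure_pmf p) (\<lambda>x. \<integral>y. P y \<partial>measure_pmf (q x))"
    proof (rule integrable_pmf_bdd[where B=B])
      fix x assume x: "x \<in> set_pmf p"
      have "0 \<le> (\<integral>y. P y \<partial>measure_pmf (q x))"
        by (rule integral_nonneg_AE) (use sub[OF x] bP in \<open>auto simp: AE_measure_pmf_iff\<close>)
      moreover have "(\<integral>y. P y \<partial>measure_pmf (q x)) \<le> (\<integral>y. B \<partial>measure_pmf (q x))"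
        by (rule integral_mono_AE) (use sub[OF x] bP iP in \<open>auto simp: AE_measure_pmf_iff\<close>)
      ultimately show "\<bar>\<integral>y. P y \<partial>measure_pmf (q x)\<bar> \<le> B" by simp
    qed
    show "integrable (measure_pmf p) (\<lambda>x. \<integral>y. N y \<partial>measure_pmf (q x))"
    proof (rule integrable_pmf_bdd[where B=B])
      fix x assume x: "x \<in> set_pmf p"
      have "0 \<le> (\<integral>y. N y \<partial>measure_pmf (q x))"
        by (rule integral_nonneg_AE) (use sub[OF x] bN in \<open>auto simp: AE_measure_pmf_iff\<close>)
      moreover have "(\<integral>y. N y \<partial>measure_pmf (q x)) \<le> (\<integral>y. B \<partial>measure_pmf (q x))"
        by (rule integral_mono_AE) (use sub[OF x] bN iN in \<open>auto simp: AE_measure_pmf_iff\<close>)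
      ultimately show "\<bar>\<integral>y. N y \<partial>measure_pmf (q x)\<bar> \<le> B" by simp
    qed
  qed
  also have "\<dots> = (\<integral>x. (\<integral>y. F y \<partial>measure_pmf (q x)) \<partial>measure_pmf p)"
  proof (rule integral_cong_AE)
    show "AE x in measure_pmf p. (\<integral>y. P y \<partial>measure_pmf (q x)) - (\<integral>y. N y \<partial>measure_pmf (q x)) = (\<integral>y. F y \<partial>measure_pmf (q x))"
      unfolding AE_measure_pmf_iff
    proof
      fix x assume x: "x \<in> set_pmf p"
      show "(\<integral>y. P y \<partial>measure_pmf (q x)) - (\<integral>y. N y \<partial>measure_pmf (q x)) = (\<integral>y. F y \<partial>measure_pmf (q x))"
        unfolding FPN by (rule Bochner_Integration.integral_diff[symmetric]) (auto intro!: iP iN sub[OF x])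
    qed
  qed auto
  finally show ?thesis .
qed



lemma lin_int:
  fixes f1 f2 :: "'a \<Rightarrow> real"
  assumes "\<And>y. y \<in> set_pmf p \<Longrightarrow> \<bar>f1 y\<bar> \<le> Ba" "\<And>y. y \<in> set_pmf p \<Longrightarrow> \<bar>f2 y\<bar> \<le> Bb"
  shows "(\<integral>y. a * f1 y + b * f2 y + c \<partial>measure_pmf p) = a * (\<integral>y. f1 y \<partial>measure_pmf p) + b * (\<integral>y. f2 y \<partial>measure_pmf p) + c"
proof -
  have i1: "integrable (measure_pmf p) f1" by (rule integrable_pmf_bdd) (use assms in auto)
  have i2: "integrable (measure_pmf p) f2" by (rule integrable_pmf_bdd) (use assms in auto)
  have "(\<integral>y. a * f1 y + b * f2 y + c \<partial>measure_pmf p) = (\<integral>y. a * f1 y + b * f2 y \<partial>measure_pmf p) + (\<integral>y. c \<partial>measure_pmf p)"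
    by (rule Bochner_Integration.integral_add) (use i1 i2 in auto)
  also have "(\<integral>y. a * f1 y + b * f2 y \<partial>measure_pmf p) = (\<integral>y. a * f1 y \<partial>measure_pmf p) + (\<integral>y. b * f2 y \<partial>measure_pmf p)"
    by (rule Bochner_Integration.integral_add) (use i1 i2 in auto)
  finally show ?thesis by simp
qed

definition uT :: "real \<Rightarrow> ('k::field \<Rightarrow> real) \<Rightarrow> 'k mat2 \<Rightarrow> real" where
  "uT M av g = max (-M) (min M (psi av g))"

definition vT :: "real \<Rightarrow> ('k::field \<Rightarrow> real) \<Rightarrow> 'k mat2 \<Rightarrow> real" where
  "vT M av g = \<bar>psi av g - uT M av g\<bar>"

lemma uT_bd: "0 \<le> M \<Longrightarrow> \<bar>uT M av g\<bar> \<le> M"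
  unfolding uT_def by auto

lemma abs_sg_mult: "\<bar>sg g * x\<bar> = \<bar>x\<bar>"
  by (cases g) auto

lemma abs_sg: "\<bar>sg g\<bar> = 1"
  by (cases g) auto

fun stepQ :: "('k::field \<Rightarrow> real) \<Rightarrow> real \<Rightarrow> 'k mat2 \<times> real \<times> real \<Rightarrow> 'k mat2 \<Rightarrow> 'k mat2 \<times> real \<times> real" where
  "stepQ av M (\<gamma>, A, D) g = (mmul \<gamma> g, A + sg \<gamma> * uT M av g, D + vT M av g)"

fun Qp :: "('k::field \<Rightarrow> real) \<Rightarrow> real \<Rightarrow> 'k mat2 pmf \<Rightarrow> nat \<Rightarrow> ('k mat2 \<times> real \<times> real) pmf" where
  "Qp av M \<mu> 0 = return_pmf (mid, 0, 0)"
| "Qp av M \<mu> (Suc n) = bind_pmf (Qp av M \<mu> n) (\<lambda>s. map_pmf (stepQ av M s) \<mu>)"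

lemma Q_fst: "map_pmf fst (Qp av M \<mu> n) = convpow \<mu> n"
proof (induction n)
  case 0
  then show ?case by simp
next
  case (Suc n)
  have f: "\<And>s. fst \<circ> stepQ av M s = mmul (fst s)" by (auto simp: fun_eq_iff)
  have "map_pmf fst (Qp av M \<mu> (Suc n)) = bind_pmf (Qp av M \<mu> n) (\<lambda>s. map_pmf (mmul (fst s)) \<mu>)"
    by (simp add: map_bind_pmf pmf.map_comp f)
  also have "\<dots> = bind_pmf (map_pmf fst (Qp av M \<mu> n)) (\<lambda>\<gamma>. map_pmf (mmul \<gamma>) \<mu>)"
    by (simp add: bind_map_pmf)
  also have "\<dots> = convpow \<mu> (Suc n)" using Suc by (simp add: conv_def)
  finally show ?case .
qed

lemma Q_inv:
  assumes av: "absolute_value av" and mu: "set_pmf \<mu> \<subseteq> monoM" and M: "0 \<le> M"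
  shows "s \<in> set_pmf (Qp av M \<mu> n) \<Longrightarrow> fst s \<in> monoM \<and> \<bar>fst (snd s)\<bar> \<le> n * M \<and> 0 \<le> snd (snd s)
     \<and> \<bar>psi av (fst s) - fst (snd s)\<bar> \<le> snd (snd s)"
proof (induction n arbitrary: s)
  case 0
  then show ?case using mid_monoM psi_mid[OF av] by simp
next
  case (Suc n)
  then obtain s0 g where s0: "s0 \<in> set_pmf (Qp av M \<mu> n)" and g: "g \<in> set_pmf \<mu>" and s: "s = stepQ av M s0 g"
    by (auto simp: set_bind_pmf)
  obtain \<gamma> A D where s0e: "s0 = (\<gamma>, A, D)" by (cases s0) auto
  have IH: "\<gamma> \<in> monoM" "\<bar>A\<bar> \<le> n * M" "0 \<le> D" "\<bar>psi av \<gamma> - A\<bar> \<le> D" using Suc.IH[OF s0] s0e by auto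
  have gm: "g \<in> monoM" using g mu by auto
  have ps: "psi av (mmul \<gamma> g) = psi av \<gamma> + sg \<gamma> * psi av g" using psi_sg_mul[OF av IH(1) gm] by simp
  have u: "\<bar>sg \<gamma> * uT M av g\<bar> \<le> M" using uT_bd[OF M, of av g] abs_sg_mult[of \<gamma> "uT M av g"] by simp
  have "\<bar>A + sg \<gamma> * uT M av g\<bar> \<le> n * M + M" using IH(2) u by linarith
  have "psi av (mmul \<gamma> g) - (A + sg \<gamma> * uT M av g) = (psi av \<gamma> - A) + sg \<gamma> * (psi av g - uT M av g)"
    using ps by (simp add: algebra_simps)
  moreover have "\<bar>(psi av \<gamma> - A) + sg \<gamma> * (psi av g - uT M av g)\<bar> \<le> \<bar>psi av \<gamma> - A\<bar> + \<bar>sg \<gamma> * (psi av g - uT M av g)\<bar>"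
    by (rule abs_triangle_ineq)
  ultimately have t: "\<bar>psi av (mmul \<gamma> g) - (A + sg \<gamma> * uT M av g)\<bar> \<le> D + vT M av g"
    using IH(4) abs_sg_mult[of \<gamma> "psi av g - uT M av g"] unfolding vT_def by linarith
  have v0: "0 \<le> vT M av g" unfolding vT_def by simp
  have se: "s = (mmul \<gamma> g, A + sg \<gamma> * uT M av g, D + vT M av g)" using s s0e by simp
  have "\<bar>A + sg \<gamma> * uT M av g\<bar> \<le> real (Suc n) * M" using \<open>\<bar>A + sg \<gamma> * uT M av g\<bar> \<le> n * M + M\<close> by (simp add: algebra_simps)
  then show ?case unfolding se using t v0 mmul_monoM[OF IH(1) gm] IH(3) by simp
qed

lemma Q_step_int:
  fixes F :: "'k::field mat2 \<times> real \<times> real \<Rightarrow> real"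
  assumes bd: "\<And>s. s \<in> set_pmf (Qp av M \<mu> (Suc n)) \<Longrightarrow> \<bar>F s\<bar> \<le> B"
  shows "(\<integral>s. F s \<partial>measure_pmf (Qp av M \<mu> (Suc n))) = (\<integral>s. (\<integral>g. F (stepQ av M s g) \<partial>measure_pmf \<mu>) \<partial>measure_pmf (Qp av M \<mu> n))"
proof -
  have "(\<integral>s. F s \<partial>measure_pmf (Qp av M \<mu> (Suc n))) = (\<integral>s. (\<integral>y. F y \<partial>measure_pmf (map_pmf (stepQ av M s) \<mu>)) \<partial>measure_pmf (Qp av M \<mu> n))"
    unfolding Qp.simps by (rule integral_bind_pmf_bdd[where B=B]) (use bd in simp)
  then show ?thesis by simp
qed

lemma c_rec:
  assumes av: "absolute_value av" and mu: "set_pmf \<mu> \<subseteq> monoM" and M: "0 \<le> M"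
  shows "(\<integral>s. sg (fst s) * fst (snd s) \<partial>measure_pmf (Qp av M \<mu> (Suc n)))
     = (\<integral>g. sg g \<partial>measure_pmf \<mu>) * (\<integral>s. sg (fst s) * fst (snd s) \<partial>measure_pmf (Qp av M \<mu> n))
       + (\<integral>g. sg g * uT M av g \<partial>measure_pmf \<mu>)"
    (is "?L = ?rho * ?c + ?kap")
proof -
  have "?L = (\<integral>s. (\<integral>g. (\<lambda>s. sg (fst s) * fst (snd s)) (stepQ av M s g) \<partial>measure_pmf \<mu>) \<partial>measure_pmf (Qp av M \<mu> n))"
  proof (rule Q_step_int[where B="Suc n * M"])
    fix s assume "s \<in> set_pmf (Qp av M \<mu> (Suc n))"
    from Q_inv[OF av mu M this] show "\<bar>sg (fst s) * fst (snd s)\<bar> \<le> real (Suc n) * M"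
      using abs_sg_mult by metis
  qed
  also have "\<dots> = (\<integral>s. ?rho * (sg (fst s) * fst (snd s)) + 0 * (sg (fst s) * fst (snd s)) + ?kap \<partial>measure_pmf (Qp av M \<mu> n))"
  proof (rule integral_cong_AE)
    show "AE s in measure_pmf (Qp av M \<mu> n). (\<integral>g. (\<lambda>s. sg (fst s) * fst (snd s)) (stepQ av M s g) \<partial>measure_pmf \<mu>)
        = ?rho * (sg (fst s) * fst (snd s)) + 0 * (sg (fst s) * fst (snd s)) + ?kap"
      unfolding AE_measure_pmf_iff
    proof
      fix s assume s: "s \<in> set_pmf (Qp av M \<mu> n)"
      obtain \<gamma> A D where se: "s = (\<gamma>, A, D)" by (cases s) auto
      have \<gamma>: "\<gamma> \<in> monoM" using Q_inv[OF av mu M s] se by simp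
      have "(\<integral>g. (\<lambda>s. sg (fst s) * fst (snd s)) (stepQ av M s g) \<partial>measure_pmf \<mu>)
          = (\<integral>g. (sg \<gamma> * A) * sg g + 1 * (sg g * uT M av g) + 0 \<partial>measure_pmf \<mu>)"
      proof (rule integral_cong_AE)
        show "AE g in measure_pmf \<mu>. (\<lambda>s. sg (fst s) * fst (snd s)) (stepQ av M s g) = (sg \<gamma> * A) * sg g + 1 * (sg g * uT M av g) + 0"
          unfolding AE_measure_pmf_iff
        proof
          fix g assume "g \<in> set_pmf \<mu>"
          then have gm: "g \<in> monoM" using mu by auto
          have "sg (mmul \<gamma> g) = sg \<gamma> * sg g" using psi_sg_mul[OF av \<gamma> gm] by simp
          then show "(\<lambda>s. sg (fst s) * fst (snd s)) (stepQ av M s g) = (sg \<gamma> * A) * sg g + 1 * (sg g * uT M av g) + 0"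
            using se sg_sq[of \<gamma>] by (simp add: algebra_simps)
        qed
      qed auto
      also have "\<dots> = (sg \<gamma> * A) * ?rho + 1 * ?kap + 0"
        by (rule lin_int[where Ba=1 and Bb=M]) (use abs_sg abs_sg_mult uT_bd[OF M] in auto)
      finally show "(\<integral>g. (\<lambda>s. sg (fst s) * fst (snd s)) (stepQ av M s g) \<partial>measure_pmf \<mu>)
        = ?rho * (sg (fst s) * fst (snd s)) + 0 * (sg (fst s) * fst (snd s)) + ?kap"
        using se by simp
    qed
  qed auto
  also have "\<dots> = ?rho * ?c + 0 * ?c + ?kap"
  proof (rule lin_int[where Ba="n*M" and Bb="n*M"])
    fix s assume "s \<in> set_pmf (Qp av M \<mu> n)"
    from Q_inv[OF av mu M this] show "\<bar>sg (fst s) * fst (snd s)\<bar> \<le> real n * M"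
      using abs_sg_mult by metis
    from Q_inv[OF av mu M \<open>s \<in> _\<close>] show "\<bar>sg (fst s) * fst (snd s)\<bar> \<le> real n * M"
      using abs_sg_mult by metis
  qed
  finally show ?thesis by simp
qed

lemma e_rec:
  assumes av: "absolute_value av" and mu: "set_pmf \<mu> \<subseteq> monoM" and M: "0 \<le> M"
  shows "(\<integral>s. (fst (snd s))\<^sup>2 \<partial>measure_pmf (Qp av M \<mu> (Suc n)))
     = (\<integral>s. (fst (snd s))\<^sup>2 \<partial>measure_pmf (Qp av M \<mu> n))
       + 2 * (\<integral>g. uT M av g \<partial>measure_pmf \<mu>) * (\<integral>s. sg (fst s) * fst (snd s) \<partial>measure_pmf (Qp av M \<mu> n))
       + (\<integral>g. (uT M av g)\<^sup>2 \<partial>measure_pmf \<mu>)"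
    (is "?L = ?e + 2 * ?m * ?c + ?w")
proof -
  have "?L = (\<integral>s. (\<integral>g. (\<lambda>s. (fst (snd s))\<^sup>2) (stepQ av M s g) \<partial>measure_pmf \<mu>) \<partial>measure_pmf (Qp av M \<mu> n))"
  proof (rule Q_step_int[where B="(Suc n * M)\<^sup>2"])
    fix s assume "s \<in> set_pmf (Qp av M \<mu> (Suc n))"
    from Q_inv[OF av mu M this] have "\<bar>fst (snd s)\<bar> \<le> real (Suc n) * M" by simp
    then show "\<bar>(fst (snd s))\<^sup>2\<bar> \<le> (real (Suc n) * M)\<^sup>2"
      by (metis abs_ge_zero abs_power2 power2_abs power_mono)
  qed
  also have "\<dots> = (\<integral>s. 1 * (fst (snd s))\<^sup>2 + (2 * ?m) * (sg (fst s) * fst (snd s)) + ?w \<partial>measure_pmf (Qp av M \<mu> n))"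
  proof (rule integral_cong_AE)
    show "AE s in measure_pmf (Qp av M \<mu> n). (\<integral>g. (\<lambda>s. (fst (snd s))\<^sup>2) (stepQ av M s g) \<partial>measure_pmf \<mu>)
        = 1 * (fst (snd s))\<^sup>2 + (2 * ?m) * (sg (fst s) * fst (snd s)) + ?w"
      unfolding AE_measure_pmf_iff
    proof
      fix s assume s: "s \<in> set_pmf (Qp av M \<mu> n)"
      obtain \<gamma> A D where se: "s = (\<gamma>, A, D)" by (cases s) auto
      have "(\<integral>g. (\<lambda>s. (fst (snd s))\<^sup>2) (stepQ av M s g) \<partial>measure_pmf \<mu>)
          = (\<integral>g. (2 * sg \<gamma> * A) * uT M av g + 1 * (uT M av g)\<^sup>2 + A\<^sup>2 \<partial>measure_pmf \<mu>)"
      proof (rule integral_cong_AE)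
        show "AE g in measure_pmf \<mu>. (\<lambda>s. (fst (snd s))\<^sup>2) (stepQ av M s g) = (2 * sg \<gamma> * A) * uT M av g + 1 * (uT M av g)\<^sup>2 + A\<^sup>2"
          unfolding AE_measure_pmf_iff
        proof
          fix g assume "g \<in> set_pmf \<mu>"
          have "(A + sg \<gamma> * uT M av g)\<^sup>2 = A\<^sup>2 + 2 * sg \<gamma> * A * uT M av g + (sg \<gamma> * sg \<gamma>) * (uT M av g)\<^sup>2"
            by (simp add: power2_eq_square algebra_simps)
          then show "(\<lambda>s. (fst (snd s))\<^sup>2) (stepQ av M s g) = (2 * sg \<gamma> * A) * uT M av g + 1 * (uT M av g)\<^sup>2 + A\<^sup>2"
            using se sg_sq[of \<gamma>] by simp
        qed
      qed auto
      also have "\<dots> = (2 * sg \<gamma> * A) * ?m + 1 * ?w + A\<^sup>2"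
      proof (rule lin_int[where Ba=M and Bb="M\<^sup>2"])
        fix g
        show "\<bar>uT M av g\<bar> \<le> M" using uT_bd[OF M] .
        show "\<bar>(uT M av g)\<^sup>2\<bar> \<le> M\<^sup>2" using uT_bd[OF M, of av g]
          by (metis abs_ge_zero abs_power2 power2_abs power_mono)
      qed
      finally show "(\<integral>g. (\<lambda>s. (fst (snd s))\<^sup>2) (stepQ av M s g) \<partial>measure_pmf \<mu>)
        = 1 * (fst (snd s))\<^sup>2 + (2 * ?m) * (sg (fst s) * fst (snd s)) + ?w"
        using se by (simp add: algebra_simps)
    qed
  qed auto
  also have "\<dots> = 1 * ?e + (2 * ?m) * ?c + ?w"
  proof (rule lin_int[where Ba="(n*M)\<^sup>2" and Bb="n*M"])
    fix s assume "s \<in> set_pmf (Qp av M \<mu> n)"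
    from Q_inv[OF av mu M this] have "\<bar>fst (snd s)\<bar> \<le> real n * M" by simp
    then show "\<bar>(fst (snd s))\<^sup>2\<bar> \<le> (real n * M)\<^sup>2"
      by (metis abs_ge_zero abs_power2 power2_abs power_mono)
    show "\<bar>sg (fst s) * fst (snd s)\<bar> \<le> real n * M"
      using abs_sg_mult \<open>\<bar>fst (snd s)\<bar> \<le> real n * M\<close> by metis
  qed
  finally show ?thesis by simp
qed



lemma int_abs_bd:
  fixes f :: "'a \<Rightarrow> real"
  assumes "\<And>y. y \<in> set_pmf p \<Longrightarrow> \<bar>f y\<bar> \<le> B"
  shows "\<bar>\<integral>y. f y \<partial>measure_pmf p\<bar> \<le> B"
proof -
  have i: "integrable (measure_pmf p) f" by (rule integrable_pmf_bdd) (use assms in auto)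
  have bd: "\<And>y. y \<in> set_pmf p \<Longrightarrow> -B \<le> f y \<and> f y \<le> B"
  proof -
    fix y assume "y \<in> set_pmf p"
    from assms[OF this] show "-B \<le> f y \<and> f y \<le> B" by arith
  qed
  have "(\<integral>y. f y \<partial>measure_pmf p) \<le> (\<integral>y. B \<partial>measure_pmf p)"
    by (rule integral_mono_AE) (use bd i in \<open>auto simp: AE_measure_pmf_iff\<close>)
  moreover have "(\<integral>y. -B \<partial>measure_pmf p) \<le> (\<integral>y. f y \<partial>measure_pmf p)"
    by (rule integral_mono_AE) (use bd i in \<open>auto simp: AE_measure_pmf_iff\<close>)
  ultimately show ?thesis by simp
qed

lemma rec_bound:
  fixes c :: "nat \<Rightarrow> real"
  assumes c0: "c 0 = 0" and cs: "\<And>n. c (Suc n) = \<rho> * c n + \<kappa>" and r: "-1 \<le> \<rho>" "\<rho> < 1"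
  shows "\<bar>c n\<bar> \<le> 2 * \<bar>\<kappa>\<bar> / (1 - \<rho>)"
proof -
  define L where "L = \<kappa> / (1 - \<rho>)"
  have Lk: "\<rho> * L + \<kappa> = L" unfolding L_def using r by (simp add: field_simps)
  have eq: "c n - L = \<rho> ^ n * (- L)" for n
  proof (induction n)
    case 0 then show ?case using c0 by simp
  next
    case (Suc n)
    have "c (Suc n) - L = \<rho> * (c n - L)" using cs[of n] Lk by (simp add: algebra_simps)
    then show ?case using Suc by simp
  qed
  have "\<bar>\<rho>\<bar> \<le> 1" using r by simp
  then have "\<bar>\<rho>\<bar> ^ n \<le> 1" by (rule power_le_one[OF abs_ge_zero])
  then have "\<bar>\<rho> ^ n\<bar> \<le> 1" by (simp add: power_abs)
  then have "\<bar>\<rho> ^ n * (- L)\<bar> \<le> \<bar>L\<bar>"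
    by (simp add: abs_mult mult_left_le_one_le)
  then have "\<bar>c n\<bar> \<le> 2 * \<bar>L\<bar>" using eq[of n] by linarith
  moreover have "\<bar>L\<bar> = \<bar>\<kappa>\<bar> / (1 - \<rho>)" unfolding L_def using r by simp
  ultimately show ?thesis by simp
qed

lemma c0: "(\<integral>s. sg (fst s) * fst (snd s) \<partial>measure_pmf (Qp av M \<mu> 0)) = 0"
proof -
  have "(\<integral>s. sg (fst s) * fst (snd s) \<partial>measure_pmf (Qp av M \<mu> 0)) = (\<integral>s. 0 \<partial>measure_pmf (Qp av M \<mu> 0))"
    by (rule integral_cong_AE) (auto simp: AE_measure_pmf_iff)
  then show ?thesis by simp
qed

lemma e0: "(\<integral>s. (fst (snd s))\<^sup>2 \<partial>measure_pmf (Qp av M \<mu> 0)) = 0"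
proof -
  have "(\<integral>s. (fst (snd s))\<^sup>2 \<partial>measure_pmf (Qp av M \<mu> 0)) = (\<integral>s. 0 \<partial>measure_pmf (Qp av M \<mu> 0))"
    by (rule integral_cong_AE) (auto simp: AE_measure_pmf_iff)
  then show ?thesis by simp
qed

lemma rho_bounds:
  assumes mu: "set_pmf \<mu> \<subseteq> monoM" and g0: "g0 \<in> set_pmf \<mu>" "sg g0 = -1"
  shows "-1 \<le> (\<integral>g. sg g \<partial>measure_pmf \<mu>) \<and> (\<integral>g. sg g \<partial>measure_pmf \<mu>) < 1"
proof
  have "\<bar>\<integral>g. sg g \<partial>measure_pmf \<mu>\<bar> \<le> 1" by (rule int_abs_bd) (simp add: abs_sg)
  then show "-1 \<le> (\<integral>g. sg g \<partial>measure_pmf \<mu>)" by simp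
  have le: "(\<integral>g. sg g \<partial>measure_pmf \<mu>) \<le> 1" using \<open>\<bar>_\<bar> \<le> 1\<close> by simp
  have i: "integrable (measure_pmf \<mu>) sg" by (rule integrable_pmf_bdd[where B=1]) (simp add: abs_sg)
  have i2: "integrable (measure_pmf \<mu>) (\<lambda>g. 1 - sg g)" using i by simp
  have nn: "AE g in measure_pmf \<mu>. 0 \<le> 1 - sg g"
    using abs_sg by (auto simp: AE_measure_pmf_iff abs_le_iff)
  show "(\<integral>g. sg g \<partial>measure_pmf \<mu>) < 1"
  proof (rule ccontr)
    assume "\<not> (\<integral>g. sg g \<partial>measure_pmf \<mu>) < 1"
    then have "(\<integral>g. sg g \<partial>measure_pmf \<mu>) = 1" using le by simp
    then have "(\<integral>g. 1 - sg g \<partial>measure_pmf \<mu>) = 0"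
      using Bochner_Integration.integral_diff[of "measure_pmf \<mu>" "\<lambda>_. 1" sg] i by simp
    then have "AE g in measure_pmf \<mu>. 1 - sg g = 0" using integral_nonneg_eq_0_iff_AE[OF i2 nn] by simp
    then have "1 - sg g0 = 0" using g0(1) by (simp add: AE_measure_pmf_iff)
    then show False using g0(2) by simp
  qed
qed

lemma EA_bound:
  assumes av: "absolute_value av" and mu: "set_pmf \<mu> \<subseteq> monoM" and M: "0 \<le> M"
    and r: "-1 \<le> (\<integral>g. sg g \<partial>measure_pmf \<mu>)" "(\<integral>g. sg g \<partial>measure_pmf \<mu>) < 1"
  shows "(\<integral>s. \<bar>fst (snd s)\<bar> \<partial>measure_pmf (Qp av M \<mu> n))
     \<le> sqrt (real n * (M\<^sup>2 + 2 * M * (2 * M / (1 - (\<integral>g. sg g \<partial>measure_pmf \<mu>)))))"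
proof -
  define \<rho> where "\<rho> = (\<integral>g. sg g \<partial>measure_pmf \<mu>)"
  define \<kappa> where "\<kappa> = (\<integral>g. sg g * uT M av g \<partial>measure_pmf \<mu>)"
  define m where "m = (\<integral>g. uT M av g \<partial>measure_pmf \<mu>)"
  define w where "w = (\<integral>g. (uT M av g)\<^sup>2 \<partial>measure_pmf \<mu>)"
  define c where "c n = (\<integral>s. sg (fst s) * fst (snd s) \<partial>measure_pmf (Qp av M \<mu> n))" for n
  define e where "e n = (\<integral>s. (fst (snd s))\<^sup>2 \<partial>measure_pmf (Qp av M \<mu> n))" for n
  define C where "C = 2 * M / (1 - \<rho>)"
  have k: "\<bar>\<kappa>\<bar> \<le> M" unfolding \<kappa>_def by (rule int_abs_bd) (use abs_sg_mult uT_bd[OF M] in metis)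
  have mb: "\<bar>m\<bar> \<le> M" unfolding m_def by (rule int_abs_bd) (use uT_bd[OF M] in metis)
  have wb: "\<bar>w\<bar> \<le> M\<^sup>2" unfolding w_def
    by (rule int_abs_bd) (use uT_bd[OF M] in \<open>metis abs_ge_zero abs_power2 power2_abs power_mono\<close>)
  have cb: "\<bar>c n\<bar> \<le> C" for n
  proof -
    have "\<bar>c n\<bar> \<le> 2 * \<bar>\<kappa>\<bar> / (1 - \<rho>)"
      by (rule rec_bound[of c \<rho> \<kappa>]) (use r c0 c_rec[OF av mu M] in \<open>simp_all add: c_def \<rho>_def \<kappa>_def\<close>)
    also have "\<dots> \<le> C" unfolding C_def using k r \<rho>_def by (simp add: divide_right_mono)
    finally show ?thesis .
  qed
  have C0: "0 \<le> C" using cb[of 0] by simp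
  have eb: "e n \<le> real n * (M\<^sup>2 + 2 * M * C)" for n
  proof (induction n)
    case 0 then show ?case using e0 by (simp add: e_def)
  next
    case (Suc n)
    have "e (Suc n) = e n + 2 * m * c n + w"
      using e_rec[OF av mu M, of n] by (simp add: e_def m_def c_def w_def)
    moreover have "\<bar>m * c n\<bar> \<le> M * C" unfolding abs_mult by (rule mult_mono) (use mb cb C0 M in auto)
    ultimately have "e (Suc n) \<le> e n + 2 * M * C + M\<^sup>2" using wb by (simp add: abs_le_iff)
    with Suc show ?case by (simp add: algebra_simps)
  qed
  have ib: "\<And>s. s \<in> set_pmf (Qp av M \<mu> n) \<Longrightarrow> \<bar>fst (snd s)\<bar> \<le> real n * M"
    using Q_inv[OF av mu M] by blast
  have i1: "integrable (measure_pmf (Qp av M \<mu> n)) (\<lambda>s. \<bar>fst (snd s)\<bar>)"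
    by (rule integrable_pmf_bdd[where B="real n * M"]) (use ib in simp)
  have i2: "integrable (measure_pmf (Qp av M \<mu> n)) (\<lambda>s. (\<bar>fst (snd s)\<bar>)\<^sup>2)"
  proof (rule integrable_pmf_bdd[where B="(real n * M)\<^sup>2"])
    fix s assume "s \<in> set_pmf (Qp av M \<mu> n)"
    from ib[OF this] show "\<bar>(\<bar>fst (snd s)\<bar>)\<^sup>2\<bar> \<le> (real n * M)\<^sup>2"
      by (metis abs_ge_zero abs_power2 power2_abs power_mono)
  qed
  have "0 \<le> measure_pmf.variance (Qp av M \<mu> n) (\<lambda>s. \<bar>fst (snd s)\<bar>)"
    by (rule measure_pmf.variance_positive)
  also have "\<dots> = (\<integral>s. (\<bar>fst (snd s)\<bar>)\<^sup>2 \<partial>measure_pmf (Qp av M \<mu> n)) - (\<integral>s. \<bar>fst (snd s)\<bar> \<partial>measure_pmf (Qp av M \<mu> n))\<^sup>2"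
    by (rule measure_pmf.variance_eq[OF i1 i2])
  finally have "(\<integral>s. \<bar>fst (snd s)\<bar> \<partial>measure_pmf (Qp av M \<mu> n))\<^sup>2 \<le> e n"
    unfolding e_def by simp
  then have "(\<integral>s. \<bar>fst (snd s)\<bar> \<partial>measure_pmf (Qp av M \<mu> n))\<^sup>2 \<le> real n * (M\<^sup>2 + 2 * M * C)"
    using eb[of n] by linarith
  then show ?thesis unfolding C_def \<rho>_def by (rule real_le_rsqrt)
qed



lemma D_nn:
  assumes av: "absolute_value av" and mu: "set_pmf \<mu> \<subseteq> monoM" and M: "0 \<le> M"
  shows "(\<integral>\<^sup>+s. ennreal (snd (snd s)) \<partial>measure_pmf (Qp av M \<mu> n)) = of_nat n * (\<integral>\<^sup>+g. ennreal (vT M av g) \<partial>measure_pmf \<mu>)"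
proof (induction n)
  case 0 then show ?case by simp
next
  case (Suc n)
  let ?V = "(\<integral>\<^sup>+g. ennreal (vT M av g) \<partial>measure_pmf \<mu>)"
  have "(\<integral>\<^sup>+s. ennreal (snd (snd s)) \<partial>measure_pmf (Qp av M \<mu> (Suc n)))
     = (\<integral>\<^sup>+s. (\<integral>\<^sup>+g. ennreal (snd (snd (stepQ av M s g))) \<partial>measure_pmf \<mu>) \<partial>measure_pmf (Qp av M \<mu> n))"
    by simp
  also have "\<dots> = (\<integral>\<^sup>+s. ennreal (snd (snd s)) + ?V \<partial>measure_pmf (Qp av M \<mu> n))"
  proof (rule nn_integral_cong_AE, unfold AE_measure_pmf_iff, intro ballI)
    fix s assume s: "s \<in> set_pmf (Qp av M \<mu> n)"
    obtain \<gamma> A D where se: "s = (\<gamma>, A, D)" by (cases s) auto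
    have D0: "0 \<le> D" using Q_inv[OF av mu M s] se by simp
    have "(\<integral>\<^sup>+g. ennreal (snd (snd (stepQ av M s g))) \<partial>measure_pmf \<mu>) = (\<integral>\<^sup>+g. ennreal D + ennreal (vT M av g) \<partial>measure_pmf \<mu>)"
      using D0 se by (simp add: vT_def)
    also have "\<dots> = (\<integral>\<^sup>+g. ennreal D \<partial>measure_pmf \<mu>) + ?V"
      by (rule nn_integral_add) auto
    also have "\<dots> = ennreal D + ?V" by simp
    finally show "(\<integral>\<^sup>+g. ennreal (snd (snd (stepQ av M s g))) \<partial>measure_pmf \<mu>) = ennreal (snd (snd s)) + ?V"
      using se by simp
  qed
  also have "\<dots> = (\<integral>\<^sup>+s. ennreal (snd (snd s)) \<partial>measure_pmf (Qp av M \<mu> n)) + (\<integral>\<^sup>+s. ?V \<partial>measure_pmf (Qp av M \<mu> n))"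
    by (rule nn_integral_add) auto
  also have "\<dots> = of_nat n * ?V + ?V" using Suc by simp
  also have "\<dots> = of_nat (Suc n) * ?V" by (simp add: algebra_simps)
  finally show ?case .
qed

lemma vT_le: "0 \<le> M \<Longrightarrow> vT M av g \<le> \<bar>psi av g\<bar>"
  by (auto simp: uT_def vT_def max_def min_def abs_if)

lemma vT_zero: "\<bar>psi av g\<bar> \<le> M \<Longrightarrow> vT M av g = 0"
  unfolding uT_def vT_def by (cases "psi av g < 0"; auto simp: max_def min_def)

lemma V_lim:
  assumes ip: "integrable (measure_pmf \<mu>) (\<lambda>g. \<bar>psi av g\<bar>)"
  shows "(\<lambda>i. \<integral>g. vT (real i) av g \<partial>measure_pmf \<mu>) \<longlonglongrightarrow> (\<integral>g. 0 \<partial>measure_pmf \<mu>)"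
proof (rule integral_dominated_convergence[where w="\<lambda>g. \<bar>psi av g\<bar>"])
  show "AE g in measure_pmf \<mu>. (\<lambda>i. vT (real i) av g) \<longlonglongrightarrow> 0"
  proof (rule AE_I2)
    fix g
    show "(\<lambda>i. vT (real i) av g) \<longlonglongrightarrow> 0"
    proof (rule tendsto_eventually, rule eventually_sequentiallyI)
      fix i assume "nat \<lceil>\<bar>psi av g\<bar>\<rceil> \<le> i"
      then have "\<bar>psi av g\<bar> \<le> real i" by linarith
      then show "vT (real i) av g = 0" by (rule vT_zero)
    qed
  qed
  fix i
  show "AE g in measure_pmf \<mu>. norm (vT (real i) av g) \<le> \<bar>psi av g\<bar>"
  proof (rule AE_I2)
    fix g
    have "0 \<le> vT (real i) av g" unfolding vT_def by (rule abs_ge_zero)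
    then show "norm (vT (real i) av g) \<le> \<bar>psi av g\<bar>" using vT_le[of "real i" av g] by simp
  qed
qed (use ip in auto)

lemma V_integrable:
  assumes ip: "integrable (measure_pmf \<mu>) (\<lambda>g. \<bar>psi av g\<bar>)" and M: "0 \<le> M"
  shows "integrable (measure_pmf \<mu>) (vT M av)"
proof (rule Bochner_Integration.integrable_bound[OF ip])
  show "AE g in measure_pmf \<mu>. norm (vT M av g) \<le> norm \<bar>psi av g\<bar>"
  proof (rule AE_I2)
    fix g
    have "0 \<le> vT M av g" unfolding vT_def by (rule abs_ge_zero)
    then show "norm (vT M av g) \<le> norm \<bar>psi av g\<bar>" using vT_le[OF M, of av g] by simp
  qed
qed simp

lemma x_bound:
  assumes av: "absolute_value av" and mu: "set_pmf \<mu> \<subseteq> monoM" and M: "0 \<le> M"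
    and ip: "integrable (measure_pmf \<mu>) (\<lambda>g. \<bar>psi av g\<bar>)"
  shows "0 \<le> (\<integral>\<gamma>. ln (opnorm av \<gamma>) \<partial>measure_pmf (convpow \<mu> n))
    \<and> (\<integral>\<gamma>. ln (opnorm av \<gamma>) \<partial>measure_pmf (convpow \<mu> n))
        \<le> (\<integral>s. \<bar>fst (snd s)\<bar> \<partial>measure_pmf (Qp av M \<mu> n)) + real n * (\<integral>g. vT M av g \<partial>measure_pmf \<mu>)"
proof -
  let ?Q = "measure_pmf (Qp av M \<mu> n)"
  define EA where "EA = (\<integral>s. \<bar>fst (snd s)\<bar> \<partial>?Q)"
  define V where "V = (\<integral>g. vT M av g \<partial>measure_pmf \<mu>)"
  have X: "(\<integral>\<gamma>. ln (opnorm av \<gamma>) \<partial>measure_pmf (convpow \<mu> n)) = (\<integral>s. ln (opnorm av (fst s)) \<partial>?Q)"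
    unfolding Q_fst[of av M \<mu> n, symmetric] by simp
  have sp: "\<And>s. s \<in> set_pmf (Qp av M \<mu> n) \<Longrightarrow> 0 \<le> ln (opnorm av (fst s)) \<and> ln (opnorm av (fst s)) \<le> \<bar>fst (snd s)\<bar> + snd (snd s)"
  proof -
    fix s assume s: "s \<in> set_pmf (Qp av M \<mu> n)"
    note I = Q_inv[OF av mu M s]
    then have "ln (opnorm av (fst s)) = \<bar>psi av (fst s)\<bar>" using opnorm_monoM[OF av] by blast
    then show "0 \<le> ln (opnorm av (fst s)) \<and> ln (opnorm av (fst s)) \<le> \<bar>fst (snd s)\<bar> + snd (snd s)"
      using I by linarith
  qed
  have nn: "0 \<le> (\<integral>s. ln (opnorm av (fst s)) \<partial>?Q)"
    by (rule integral_nonneg_AE) (use sp in \<open>auto simp: AE_measure_pmf_iff\<close>)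
  have EA0: "0 \<le> EA" unfolding EA_def by (rule integral_nonneg_AE) auto
  have V0: "0 \<le> V" unfolding V_def by (rule integral_nonneg_AE) (auto simp: vT_def)
  have iA: "integrable ?Q (\<lambda>s. \<bar>fst (snd s)\<bar>)"
    by (rule integrable_pmf_bdd[where B="real n * M"]) (use Q_inv[OF av mu M] in simp)
  have "(\<integral>\<^sup>+s. ennreal (ln (opnorm av (fst s))) \<partial>?Q) \<le> (\<integral>\<^sup>+s. ennreal \<bar>fst (snd s)\<bar> + ennreal (snd (snd s)) \<partial>?Q)"
  proof (rule nn_integral_mono_AE, unfold AE_measure_pmf_iff, intro ballI)
    fix s assume s: "s \<in> set_pmf (Qp av M \<mu> n)"
    have "0 \<le> snd (snd s)" using Q_inv[OF av mu M s] by simp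
    then show "ennreal (ln (opnorm av (fst s))) \<le> ennreal \<bar>fst (snd s)\<bar> + ennreal (snd (snd s))"
      using sp[OF s] by (simp flip: ennreal_plus add: ennreal_leI)
  qed
  also have "\<dots> = (\<integral>\<^sup>+s. ennreal \<bar>fst (snd s)\<bar> \<partial>?Q) + (\<integral>\<^sup>+s. ennreal (snd (snd s)) \<partial>?Q)"
    by (rule nn_integral_add) auto
  also have "(\<integral>\<^sup>+s. ennreal \<bar>fst (snd s)\<bar> \<partial>?Q) = ennreal EA"
    unfolding EA_def by (rule nn_integral_eq_integral[OF iA]) auto
  also have "(\<integral>\<^sup>+s. ennreal (snd (snd s)) \<partial>?Q) = of_nat n * (\<integral>\<^sup>+g. ennreal (vT M av g) \<partial>measure_pmf \<mu>)"
    by (rule D_nn[OF av mu M])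
  also have "(\<integral>\<^sup>+g. ennreal (vT M av g) \<partial>measure_pmf \<mu>) = ennreal V"
    unfolding V_def by (rule nn_integral_eq_integral[OF V_integrable[OF ip M]]) (auto simp: vT_def)
  also have "ennreal EA + of_nat n * ennreal V = ennreal (EA + real n * V)"
    using EA0 V0 by (simp add: ennreal_mult ennreal_of_nat_eq_real_of_nat)
  finally have "(\<integral>s. ln (opnorm av (fst s)) \<partial>?Q) \<le> EA + real n * V"
    by (intro integral_real_bounded) (use EA0 V0 in auto)
  then show ?thesis using nn X unfolding EA_def V_def by simp
qed

theorem proposition5p3:
  fixes av :: "'k::field \<Rightarrow> real" and \<mu> :: "'k mat2 pmf"
  assumes "complete_valued_field av"
    and "set_pmf \<mu> \<subseteq> SL2"
    and "integrable (measure_pmf \<mu>) (\<lambda>\<gamma>. ln (opnorm av \<gamma>))"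
    and "\<forall>g \<in> set_pmf \<mu>. mobius g ` {Fin 0, Infty} = {Fin 0, Infty}"
    and "\<exists>g \<in> set_pmf \<mu>. mobius g (Fin 0) = Infty \<and> mobius g Infty = Fin 0"
  shows "(\<lambda>n. (\<integral>\<gamma>. ln (opnorm av \<gamma>) \<partial>measure_pmf (convpow \<mu> n)) / real n)
           \<longlonglongrightarrow> 0"
proof -
  have av: "absolute_value av" using assms(1) unfolding complete_valued_field_def by simp
  have mu: "set_pmf \<mu> \<subseteq> monoM" using assms(2,4) in_monoM by blast
  obtain g0 where g0: "g0 \<in> set_pmf \<mu>" "mobius g0 (Fin 0) = Infty" using assms(5) by blast
  have sg0: "sg g0 = -1" using swap_sg[OF _ g0(2)] g0(1) mu by blast
  define \<rho> where "\<rho> = (\<integral>g. sg g \<partial>measure_pmf \<mu>)"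
  have r: "-1 \<le> \<rho>" "\<rho> < 1" using rho_bounds[OF mu g0(1) sg0] unfolding \<rho>_def by auto
  have ip: "integrable (measure_pmf \<mu>) (\<lambda>g. \<bar>psi av g\<bar>)"
  proof (rule integrable_cong_AE[THEN iffD1, OF _ _ _ assms(3)])
    show "AE g in measure_pmf \<mu>. ln (opnorm av g) = \<bar>psi av g\<bar>"
      using mu opnorm_monoM[OF av] by (auto simp: AE_measure_pmf_iff)
  qed auto
  define X where "X n = (\<integral>\<gamma>. ln (opnorm av \<gamma>) \<partial>measure_pmf (convpow \<mu> n))" for n
  define V where "V i = (\<integral>g. vT (real i) av g \<partial>measure_pmf \<mu>)" for i :: nat
  have VL: "V \<longlonglongrightarrow> 0" using V_lim[OF ip] unfolding V_def by simp
  have "(\<lambda>n. X n / real n) \<longlonglongrightarrow> 0"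
  proof (rule LIMSEQ_I)
    fix r :: real assume r0: "0 < r"
    obtain i where i: "\<forall>j\<ge>i. norm (V j - 0) < r/2" using LIMSEQ_D[OF VL, of "r/2"] r0 by auto
    define M where "M = real i"
    have M0: "0 \<le> M" unfolding M_def by simp
    define K where "K = M\<^sup>2 + 2 * M * (2 * M / (1 - \<rho>))"
    have K0: "0 \<le> K" unfolding K_def using M0 r by simp
    have Vi: "\<bar>V i\<bar> < r/2" using i by simp
    define N where "N = nat \<lceil>4 * K / r\<^sup>2\<rceil> + 1"
    show "\<exists>no. \<forall>n\<ge>no. norm (X n / real n - 0) < r"
    proof (rule exI[of _ N], intro allI impI)
      fix n assume n: "N \<le> n"
      have npos: "0 < real n" using n unfolding N_def by simp
      have "4 * K / r\<^sup>2 < real n" using n unfolding N_def by linarith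
      then have "4 * K < real n * r\<^sup>2" using r0 by (simp add: divide_less_eq)
      then have "real n * K < (real n * r / 2)\<^sup>2" using npos
        by (simp add: power2_eq_square field_simps)
      then have "sqrt (real n * K) < sqrt ((real n * r / 2)\<^sup>2)" by (rule real_sqrt_less_mono)
      also have "\<dots> = real n * r / 2" using npos r0 by simp
      finally have sq: "sqrt (real n * K) < real n * r / 2" .
      have xb: "0 \<le> X n \<and> X n \<le> (\<integral>s. \<bar>fst (snd s)\<bar> \<partial>measure_pmf (Qp av M \<mu> n)) + real n * V i"
        using x_bound[OF av mu M0 ip, of n] unfolding X_def V_def M_def by simp
      have ea: "(\<integral>s. \<bar>fst (snd s)\<bar> \<partial>measure_pmf (Qp av M \<mu> n)) \<le> sqrt (real n * K)"
        using EA_bound[OF av mu M0, of n] r unfolding K_def \<rho>_def by simp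
      have "real n * V i \<le> real n * (r/2)" using Vi npos by simp
      then have "X n < real n * r" using xb ea sq by linarith
      then have "X n / real n < r" using npos by (simp add: divide_less_eq mult.commute)
      moreover have "0 \<le> X n / real n" using xb npos by simp
      ultimately show "norm (X n / real n - 0) < r" by simp
    qed
  qed
  then show ?thesis unfolding X_def .
qed

end
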